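(* Let $\pi$ be a model with observation space $Y$ and parameter space $\Theta$, let $Y'$ be a space and $t:Y\to Y'$ a measurable function, and write $t^{-1}(y')=\{y\in Y: t(y)=y'\}$. Let $\pi'$ be the model with parameter space $\Theta$ and observation space $Y'$ given by $\pi'_{\text{prior}}(\theta)=\pi_{\text{prior}}(\theta)$ and $\pi'_{\text{obs}}(y'\mid\theta)=\int_{t^{-1}(y')}\pi_{\text{obs}}(y\mid\theta)\,\mathrm{d}y$ for all $\theta\in\Theta$, $y'\in Y'$. Let $f'$ be a test quantity for $\pi'$ and $\phi'$ a posterior family for $\pi'$ such that $\phi'$ passes continuous SBC (for model $\pi'$) with respect to $f'$. Define the test quantity $f(\theta,y)=f'(\theta,t(y))$ and the posterior family $\phi(\theta\mid y)=\phi'(\theta\mid t(y))$ on $\Theta$, $Y$. Then $\phi$ passes continuous SBC (for model $\pi$) with respect to $f$.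
   Context: A model on data space $Y$ and parameter space $\Theta$ is given by a prior density $\pi_{\text{prior}}(\theta)$ and observation density $\pi_{\text{obs}}(y\mid\theta)$; $\pi_{\text{marg}}(y)=\int_\Theta\pi_{\text{obs}}(y\mid\theta)\pi_{\text{prior}}(\theta)\,\mathrm{d}\theta$ and $\pi_{\text{post}}(\theta\mid y)=\pi_{\text{obs}}(y\mid\theta)\pi_{\text{prior}}(\theta)/\pi_{\text{marg}}(y)$. A posterior family is $\phi:\Theta\times Y\to\mathbb{R}^+$ with $\int_\Theta\phi(\theta\mid y)\,\mathrm{d}\theta=1$ for all $y$; a test quantity is a measurable $f:\Theta\times Y\to\mathbb{R}$. For a given model: $C_{\phi,f}(s\mid y)=\int_\Theta\mathbb{I}[f(\theta,y)\le s]\phi(\theta\mid y)\,\mathrm{d}\theta$, $D_{\phi,f}(s\mid y)=\int_\Theta\mathbb{I}[f(\theta,y)=s]\phi(\theta\mid y)\,\mathrm{d}\theta$; with $U\sim\mathrm{uniform}[0,1]$, $r_{\phi,f}(x\mid\tilde\theta,y)=\Pr\big(C_{\phi,f}(f(\tilde\theta,y)\mid y)-U\,D_{\phi,f}(f(\tilde\theta,y)\mid y)\le x\big)$, $q_{\phi,f}(x\mid y)=\int_\Theta\pi_{\text{post}}(\tilde\theta\mid y)r_{\phi,f}(x\mid\tilde\theta,y)\,\mathrm{d}\tilde\theta$. $\phi$ passes continuous SBC w.r.t. $f$ if $\int_Yq_{\phi,f}(x\mid y)\pi_{\text{marg}}(y)\,\mathrm{d}y=x$ for all $x\in[0,1]$.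 *)

theory Defs
  imports "HOL-Probability.Probability"
begin

text \<open>Parameter space: measure MT (base measure d theta);
data space: measure MY (base measure dy). Densities are real valued.
obs y theta  stands for  pi_obs(y | theta);  phi theta y  for  phi(theta | y);
f theta y  for  f(theta, y).\<close>

definition is_model ::
  "'t measure \<Rightarrow> 'y measure \<Rightarrow> ('t \<Rightarrow> real) \<Rightarrow> ('y \<Rightarrow> 't \<Rightarrow> real) \<Rightarrow> bool" where
  "is_model MT MY prior obs \<longleftrightarrow>
     prior \<in> borel_measurable MT \<and> (\<forall>\<theta>\<in>space MT. 0 \<le> prior \<theta>) \<and>
     (\<integral>\<theta>. prior \<theta> \<partial>MT) = 1 \<and>
     (\<lambda>(y, \<theta>). obs y \<theta>) \<in> borel_measurable (MY \<Otimes>\<^sub>M MT) \<and>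
     (\<forall>y\<in>space MY. \<forall>\<theta>\<in>space MT. 0 \<le> obs y \<theta>) \<and>
     (\<forall>\<theta>\<in>space MT. (\<integral>y. obs y \<theta> \<partial>MY) = 1)"

definition marg :: "'t measure \<Rightarrow> ('t \<Rightarrow> real) \<Rightarrow> ('y \<Rightarrow> 't \<Rightarrow> real) \<Rightarrow> 'y \<Rightarrow> real" where
  "marg MT prior obs y = (\<integral>\<theta>. obs y \<theta> * prior \<theta> \<partial>MT)"

definition post :: "'t measure \<Rightarrow> ('t \<Rightarrow> real) \<Rightarrow> ('y \<Rightarrow> 't \<Rightarrow> real) \<Rightarrow> 't \<Rightarrow> 'y \<Rightarrow> real" where
  "post MT prior obs \<theta> y = obs y \<theta> * prior \<theta> / marg MT prior obs y"

definition posterior_family :: "'t measure \<Rightarrow> 'y measure \<Rightarrow> ('t \<Rightarrow> 'y \<Rightarrow> real) \<Rightarrow> bool" where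
  "posterior_family MT MY phi \<longleftrightarrow>
     (\<lambda>(\<theta>, y). phi \<theta> y) \<in> borel_measurable (MT \<Otimes>\<^sub>M MY) \<and>
     (\<forall>\<theta>\<in>space MT. \<forall>y\<in>space MY. 0 \<le> phi \<theta> y) \<and>
     (\<forall>y\<in>space MY. (\<integral>\<theta>. phi \<theta> y \<partial>MT) = 1)"

definition test_quantity :: "'t measure \<Rightarrow> 'y measure \<Rightarrow> ('t \<Rightarrow> 'y \<Rightarrow> real) \<Rightarrow> bool" where
  "test_quantity MT MY f \<longleftrightarrow> (\<lambda>(\<theta>, y). f \<theta> y) \<in> borel_measurable (MT \<Otimes>\<^sub>M MY)"

definition Cdf :: "'t measure \<Rightarrow> ('t \<Rightarrow> 'y \<Rightarrow> real) \<Rightarrow> ('t \<Rightarrow> 'y \<Rightarrow> real) \<Rightarrow> real \<Rightarrow> 'y \<Rightarrow> real" where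
  "Cdf MT phi f s y = (\<integral>\<theta>. (if f \<theta> y \<le> s then 1 else 0) * phi \<theta> y \<partial>MT)"

definition Dmass :: "'t measure \<Rightarrow> ('t \<Rightarrow> 'y \<Rightarrow> real) \<Rightarrow> ('t \<Rightarrow> 'y \<Rightarrow> real) \<Rightarrow> real \<Rightarrow> 'y \<Rightarrow> real" where
  "Dmass MT phi f s y = (\<integral>\<theta>. (if f \<theta> y = s then 1 else 0) * phi \<theta> y \<partial>MT)"

text \<open>r(x | theta', y) = Pr(C - U D \<le> x) with U uniform on [0,1], i.e. the Lebesgue
measure of the set of u in [0,1] with C - u D \<le> x.\<close>
definition rank_cdf :: "'t measure \<Rightarrow> ('t \<Rightarrow> 'y \<Rightarrow> real) \<Rightarrow> ('t \<Rightarrow> 'y \<Rightarrow> real) \<Rightarrow> real \<Rightarrow> 't \<Rightarrow> 'y \<Rightarrow> real" where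
  "rank_cdf MT phi f x \<theta>' y =
     measure lborel {u \<in> {0..1::real}.
        Cdf MT phi f (f \<theta>' y) y - u * Dmass MT phi f (f \<theta>' y) y \<le> x}"

definition qfun :: "'t measure \<Rightarrow> ('t \<Rightarrow> real) \<Rightarrow> ('y \<Rightarrow> 't \<Rightarrow> real) \<Rightarrow>
     ('t \<Rightarrow> 'y \<Rightarrow> real) \<Rightarrow> ('t \<Rightarrow> 'y \<Rightarrow> real) \<Rightarrow> real \<Rightarrow> 'y \<Rightarrow> real" where
  "qfun MT prior obs phi f x y = (\<integral>\<theta>'. post MT prior obs \<theta>' y * rank_cdf MT phi f x \<theta>' y \<partial>MT)"

definition passes_SBC :: "'t measure \<Rightarrow> 'y measure \<Rightarrow> ('t \<Rightarrow> real) \<Rightarrow> ('y \<Rightarrow> 't \<Rightarrow> real) \<Rightarrow>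
     ('t \<Rightarrow> 'y \<Rightarrow> real) \<Rightarrow> ('t \<Rightarrow> 'y \<Rightarrow> real) \<Rightarrow> bool" where
  "passes_SBC MT MY prior obs phi f \<longleftrightarrow>
     (\<forall>x\<in>{0..1::real}. (\<integral>y. qfun MT prior obs phi f x y * marg MT prior obs y \<partial>MY) = x)"

end

theory Submission
  imports Defs
begin

lemma rank_cdf_meas:
  assumes sf: "sigma_finite_measure MT" and tq: "test_quantity MT MY f"
    and pf: "posterior_family MT MY phi"
  shows "(\<lambda>(\<theta>', y). rank_cdf MT phi f x \<theta>' y) \<in> borel_measurable (MT \<Otimes>\<^sub>M MY)"
proof -
  interpret sigma_finite_measure MT by fact
  have f[measurable]: "(\<lambda>(\<theta>,y). f \<theta> y) \<in> borel_measurable (MT \<Otimes>\<^sub>M MY)"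
    using tq unfolding test_quantity_def .
  have p[measurable]: "(\<lambda>(\<theta>,y). phi \<theta> y) \<in> borel_measurable (MT \<Otimes>\<^sub>M MY)"
    using pf unfolding posterior_family_def by blast
  define C where "C = (\<lambda>p. Cdf MT phi f (f (fst p) (snd p)) (snd p))"
  define D where "D = (\<lambda>p. Dmass MT phi f (f (fst p) (snd p)) (snd p))"
  have C[measurable]: "C \<in> borel_measurable (MT \<Otimes>\<^sub>M MY)"
    unfolding C_def Cdf_def by measurable
  have D[measurable]: "D \<in> borel_measurable (MT \<Otimes>\<^sub>M MY)"
    unfolding D_def Dmass_def by measurable
  define Q where "Q = {q \<in> space ((MT \<Otimes>\<^sub>M MY) \<Otimes>\<^sub>M lborel). snd q \<in> {0..1::real} \<and> C (fst q) - snd q * D (fst q) \<le> x}"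
  have Q: "Q \<in> sets ((MT \<Otimes>\<^sub>M MY) \<Otimes>\<^sub>M lborel)"
    unfolding Q_def by measurable
  have meas: "(\<lambda>p. enn2real (emeasure lborel (Pair p -` Q))) \<in> borel_measurable (MT \<Otimes>\<^sub>M MY)"
    using lborel.measurable_emeasure_Pair[OF Q] by measurable
  have eq: "enn2real (emeasure lborel (Pair p -` Q)) = (\<lambda>(\<theta>', y). rank_cdf MT phi f x \<theta>' y) p"
    if p: "p \<in> space (MT \<Otimes>\<^sub>M MY)" for p
  proof -
    have "Pair p -` Q = {u \<in> {0..1::real}. C p - u * D p \<le> x}"
      using p unfolding Q_def by (auto simp: space_pair_measure)
    moreover obtain a b where "p = (a, b)" by (cases p)
    ultimately show ?thesis by (simp add: measure_def rank_cdf_def C_def D_def)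
  qed
  show ?thesis by (rule measurable_cong[THEN iffD1, OF eq meas])
qed

lemma setm: "{u \<in> {0..1::real}. c - u * d \<le> x} \<in> sets lborel"
  by measurable
lemma "{0..1::real} \<in> fmeasurable lborel" by (simp add: fmeasurable_def)
lemma rank_cdf_bounds: "0 \<le> rank_cdf MT phi f x \<theta>' y" "rank_cdf MT phi f x \<theta>' y \<le> 1"
proof -
  show "0 \<le> rank_cdf MT phi f x \<theta>' y" unfolding rank_cdf_def by simp
  have "rank_cdf MT phi f x \<theta>' y \<le> measure lborel {0..1::real}"
    unfolding rank_cdf_def
    by (rule measure_mono_fmeasurable[OF _ setm]) (auto simp: fmeasurable_def)
  then show "rank_cdf MT phi f x \<theta>' y \<le> 1" by simp
qed
lemma one_nn:
  fixes g :: "'a \<Rightarrow> real"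
  assumes "g \<in> borel_measurable M" "\<forall>x\<in>space M. 0 \<le> g x" "(\<integral>x. g x \<partial>M) = 1"
  shows "(\<integral>\<^sup>+x. ennreal (g x) \<partial>M) = 1"
proof -
  have "integrable M g" using assms(3) not_integrable_integral_eq by fastforce
  then show ?thesis using assms by (subst nn_integral_eq_integral) auto
qed

lemma sbc_integral:
  assumes sfT: "sigma_finite_measure MT" and sfY: "sigma_finite_measure MY"
    and m: "is_model MT MY prior obs"
    and R[measurable]: "(\<lambda>(\<theta>,y). R \<theta> y) \<in> borel_measurable (MT \<Otimes>\<^sub>M MY)"
    and R0: "\<And>\<theta> y. 0 \<le> R \<theta> y" and R1: "\<And>\<theta> y. R \<theta> y \<le> 1"
  shows "(\<integral>y. (\<integral>\<theta>. post MT prior obs \<theta> y * R \<theta> y \<partial>MT) * marg MT prior obs y \<partial>MY)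
       = enn2real (\<integral>\<^sup>+\<theta>. ennreal (prior \<theta>) * (\<integral>\<^sup>+y. ennreal (obs y \<theta> * R \<theta> y) \<partial>MY) \<partial>MT)"
proof -
  interpret T: sigma_finite_measure MT by fact
  interpret Y: sigma_finite_measure MY by fact
  interpret YT: pair_sigma_finite MY MT ..
  have pr[measurable]: "prior \<in> borel_measurable MT" and pr0: "\<And>\<theta>. \<theta> \<in> space MT \<Longrightarrow> 0 \<le> prior \<theta>"
    and pr1: "(\<integral>\<theta>. prior \<theta> \<partial>MT) = 1"
    and ob[measurable]: "(\<lambda>(y, \<theta>). obs y \<theta>) \<in> borel_measurable (MY \<Otimes>\<^sub>M MT)"
    and ob0: "\<And>y \<theta>. y \<in> space MY \<Longrightarrow> \<theta> \<in> space MT \<Longrightarrow> 0 \<le> obs y \<theta>"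
    and ob1: "\<And>\<theta>. \<theta> \<in> space MT \<Longrightarrow> (\<integral>y. obs y \<theta> \<partial>MY) = 1"
    using m unfolding is_model_def by auto
  define P where "P y = (\<integral>\<^sup>+\<theta>. ennreal (obs y \<theta> * prior \<theta>) \<partial>MT)" for y
  define Q where "Q y = (\<integral>\<^sup>+\<theta>. ennreal (obs y \<theta> * prior \<theta> * R \<theta> y) \<partial>MT)" for y
  have Pm[measurable]: "P \<in> borel_measurable MY" unfolding P_def by measurable
  have Qm[measurable]: "Q \<in> borel_measurable MY" unfolding Q_def by measurable
  have "(\<integral>\<^sup>+y. P y \<partial>MY) = (\<integral>\<^sup>+\<theta>. (\<integral>\<^sup>+y. ennreal (obs y \<theta> * prior \<theta>) \<partial>MY) \<partial>MT)"
    unfolding P_def by (rule YT.Fubini'[symmetric]) measurable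
  also have "\<dots> = (\<integral>\<^sup>+\<theta>. ennreal (prior \<theta>) * (\<integral>\<^sup>+y. ennreal (obs y \<theta>) \<partial>MY) \<partial>MT)"
    by (intro nn_integral_cong) (auto simp: ennreal_mult'' ob0 pr0 nn_integral_cmult mult.commute
        intro!: nn_integral_cong[THEN trans, OF _ nn_integral_cmult])
  also have "\<dots> = (\<integral>\<^sup>+\<theta>. ennreal (prior \<theta>) \<partial>MT)"
    by (intro nn_integral_cong) (simp add: one_nn ob0 ob1)
  also have "\<dots> = 1" using one_nn[OF pr _ pr1] pr0 by auto
  finally have Pint: "(\<integral>\<^sup>+y. P y \<partial>MY) = 1" .
  have Pfin: "AE y in MY. P y \<noteq> \<infinity>"
    by (rule nn_integral_PInf_AE) (auto simp: Pint)
  have key: "(\<integral>\<theta>. post MT prior obs \<theta> y * R \<theta> y \<partial>MT) * marg MT prior obs y = enn2real (Q y)"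
    if y: "y \<in> space MY" and fin: "P y \<noteq> \<infinity>" for y
  proof -
    have i1: "integrable MT (\<lambda>\<theta>. obs y \<theta> * prior \<theta>)"
    proof (rule integrableI_nn_integral_finite)
      show "(\<integral>\<^sup>+\<theta>. ennreal (obs y \<theta> * prior \<theta>) \<partial>MT) = ennreal (enn2real (P y))"
        using fin unfolding P_def by (simp add: less_top)
    qed (use y ob0 pr0 in auto)
    have i2: "integrable MT (\<lambda>\<theta>. obs y \<theta> * prior \<theta> * R \<theta> y)"
    proof (rule Bochner_Integration.integrable_bound[OF i1])
      show "AE \<theta> in MT. norm (obs y \<theta> * prior \<theta> * R \<theta> y) \<le> norm (obs y \<theta> * prior \<theta>)"
        using y ob0 pr0 R0 R1 by (auto intro!: AE_I2 mult_left_le simp: abs_mult)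
    qed (use y in measurable)
    have mg: "marg MT prior obs y = (\<integral>\<theta>. obs y \<theta> * prior \<theta> \<partial>MT)" by (simp add: marg_def)
    have "(\<integral>\<theta>. post MT prior obs \<theta> y * R \<theta> y \<partial>MT) = (\<integral>\<theta>. (obs y \<theta> * prior \<theta> * R \<theta> y) / marg MT prior obs y \<partial>MT)"
      by (simp add: post_def)
    also have "\<dots> = (\<integral>\<theta>. obs y \<theta> * prior \<theta> * R \<theta> y \<partial>MT) / marg MT prior obs y"
      by (rule integral_divide_zero)
    finally have q: "(\<integral>\<theta>. post MT prior obs \<theta> y * R \<theta> y \<partial>MT) = (\<integral>\<theta>. obs y \<theta> * prior \<theta> * R \<theta> y \<partial>MT) / marg MT prior obs y" .
    have e: "(\<integral>\<theta>. post MT prior obs \<theta> y * R \<theta> y \<partial>MT) * marg MT prior obs y = (\<integral>\<theta>. obs y \<theta> * prior \<theta> * R \<theta> y \<partial>MT)"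
    proof (cases "marg MT prior obs y = 0")
      case True
      have "(\<integral>\<theta>. obs y \<theta> * prior \<theta> * R \<theta> y \<partial>MT) \<le> (\<integral>\<theta>. obs y \<theta> * prior \<theta> \<partial>MT)"
        using y ob0 pr0 R0 R1 by (intro integral_mono[OF i2 i1]) (auto intro!: mult_left_le)
      moreover have "0 \<le> (\<integral>\<theta>. obs y \<theta> * prior \<theta> * R \<theta> y \<partial>MT)"
        using y ob0 pr0 R0 by (intro integral_nonneg_AE AE_I2) auto
      ultimately show ?thesis using True mg by simp
    qed (simp add: q)
    also have "\<dots> = enn2real (Q y)" unfolding Q_def
      using y ob0 pr0 R0 by (intro integral_eq_nn_integral AE_I2 borel_measurable_integrable[OF i2]) auto
    finally show ?thesis .
  qed
  have Qle: "Q y \<le> P y" if "y \<in> space MY" for y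
    unfolding Q_def P_def using that ob0 pr0 R1
    by (intro nn_integral_mono) (auto intro!: mult_left_le)
  have m1: "(\<lambda>y. (\<integral>\<theta>. post MT prior obs \<theta> y * R \<theta> y \<partial>MT) * marg MT prior obs y) \<in> borel_measurable MY"
    unfolding post_def marg_def by measurable
  have "(\<integral>y. (\<integral>\<theta>. post MT prior obs \<theta> y * R \<theta> y \<partial>MT) * marg MT prior obs y \<partial>MY)
      = (\<integral>y. enn2real (Q y) \<partial>MY)"
  proof (rule integral_cong_AE[OF m1])
    show "AE y in MY. (\<integral>\<theta>. post MT prior obs \<theta> y * R \<theta> y \<partial>MT) * marg MT prior obs y = enn2real (Q y)"
      using Pfin AE_space by eventually_elim (simp add: key)
  qed measurable
  also have "\<dots> = enn2real (\<integral>\<^sup>+y. ennreal (enn2real (Q y)) \<partial>MY)"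
    by (rule integral_eq_nn_integral) auto
  also have "(\<integral>\<^sup>+y. ennreal (enn2real (Q y)) \<partial>MY) = (\<integral>\<^sup>+y. Q y \<partial>MY)"
  proof (rule nn_integral_cong_AE)
    show "AE y in MY. ennreal (enn2real (Q y)) = Q y"
      using Pfin AE_space proof eventually_elim
      case (elim y)
      then have "Q y \<noteq> \<infinity>" using Qle[of y] by (auto simp: top_unique)
      then show ?case by (simp add: less_top)
    qed
  qed
  also have "(\<integral>\<^sup>+y. Q y \<partial>MY) = (\<integral>\<^sup>+\<theta>. (\<integral>\<^sup>+y. ennreal (obs y \<theta> * prior \<theta> * R \<theta> y) \<partial>MY) \<partial>MT)"
    unfolding Q_def by (rule YT.Fubini'[symmetric]) measurable
  also have "\<dots> = (\<integral>\<^sup>+\<theta>. ennreal (prior \<theta>) * (\<integral>\<^sup>+y. ennreal (obs y \<theta> * R \<theta> y) \<partial>MY) \<partial>MT)"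
  proof (intro nn_integral_cong)
    fix \<theta> assume th: "\<theta> \<in> space MT"
    have "(\<integral>\<^sup>+y. ennreal (obs y \<theta> * prior \<theta> * R \<theta> y) \<partial>MY) = (\<integral>\<^sup>+y. ennreal (prior \<theta>) * ennreal (obs y \<theta> * R \<theta> y) \<partial>MY)"
      using th ob0 pr0 R0 by (intro nn_integral_cong) (auto simp: ennreal_mult'' mult_ac)
    also have "\<dots> = ennreal (prior \<theta>) * (\<integral>\<^sup>+y. ennreal (obs y \<theta> * R \<theta> y) \<partial>MY)"
      using th by (intro nn_integral_cmult) measurable
    finally show "(\<integral>\<^sup>+y. ennreal (obs y \<theta> * prior \<theta> * R \<theta> y) \<partial>MY) = ennreal (prior \<theta>) * (\<integral>\<^sup>+y. ennreal (obs y \<theta> * R \<theta> y) \<partial>MY)" .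
  qed
  finally show ?thesis .
qed
lemma rank_cdf_comp:
  "rank_cdf MT (\<lambda>\<theta> y. phi' \<theta> (t y)) (\<lambda>\<theta> y. f' \<theta> (t y)) x \<theta>' y = rank_cdf MT phi' f' x \<theta>' (t y)"
  by (simp add: rank_cdf_def Cdf_def Dmass_def)

theorem theorem7:
  fixes MT :: "'t measure" and MY :: "'y measure" and MY' :: "'z measure"
    and prior :: "'t \<Rightarrow> real" and obs :: "'y \<Rightarrow> 't \<Rightarrow> real"
    and obs' :: "'z \<Rightarrow> 't \<Rightarrow> real" and t :: "'y \<Rightarrow> 'z"
    and f' :: "'t \<Rightarrow> 'z \<Rightarrow> real" and phi' :: "'t \<Rightarrow> 'z \<Rightarrow> real"
  assumes "sigma_finite_measure MT" and "sigma_finite_measure MY" and "sigma_finite_measure MY'"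
    and "is_model MT MY prior obs"
    and "t \<in> measurable MY MY'"
    and "is_model MT MY' prior obs'"
    and "\<forall>\<theta>\<in>space MT. density MY' (\<lambda>y'. ennreal (obs' y' \<theta>))
                        = distr (density MY (\<lambda>y. ennreal (obs y \<theta>))) MY' t"
    and "test_quantity MT MY' f'"
    and "posterior_family MT MY' phi'"
    and "passes_SBC MT MY' prior obs' phi' f'"
  shows "passes_SBC MT MY prior obs (\<lambda>\<theta> y. phi' \<theta> (t y)) (\<lambda>\<theta> y. f' \<theta> (t y))"
  unfolding passes_SBC_def
proof
  fix x :: real assume x: "x \<in> {0..1}"
  note tm[measurable] = assms(5)
  define R where "R = (\<lambda>\<theta> z. rank_cdf MT phi' f' x \<theta> z)"
  have Rm[measurable]: "(\<lambda>(\<theta>, z). R \<theta> z) \<in> borel_measurable (MT \<Otimes>\<^sub>M MY')"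
    unfolding R_def by (rule rank_cdf_meas[OF assms(1) assms(8) assms(9)])
  have Rm2: "(\<lambda>(\<theta>, y). R \<theta> (t y)) \<in> borel_measurable (MT \<Otimes>\<^sub>M MY)"
    by measurable
  have R0: "\<And>\<theta> z. 0 \<le> R \<theta> z" and R1: "\<And>\<theta> z. R \<theta> z \<le> 1"
    unfolding R_def by (rule rank_cdf_bounds)+
  have ob0: "\<And>y \<theta>. y \<in> space MY \<Longrightarrow> \<theta> \<in> space MT \<Longrightarrow> 0 \<le> obs y \<theta>"
    and ob[measurable]: "(\<lambda>(y, \<theta>). obs y \<theta>) \<in> borel_measurable (MY \<Otimes>\<^sub>M MT)"
    using assms(4) unfolding is_model_def by auto
  have ob0': "\<And>y \<theta>. y \<in> space MY' \<Longrightarrow> \<theta> \<in> space MT \<Longrightarrow> 0 \<le> obs' y \<theta>"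
    and ob'[measurable]: "(\<lambda>(y, \<theta>). obs' y \<theta>) \<in> borel_measurable (MY' \<Otimes>\<^sub>M MT)"
    using assms(6) unfolding is_model_def by auto
  have inner: "(\<integral>\<^sup>+y. ennreal (obs y \<theta> * R \<theta> (t y)) \<partial>MY) = (\<integral>\<^sup>+z. ennreal (obs' z \<theta> * R \<theta> z) \<partial>MY')"
    if th: "\<theta> \<in> space MT" for \<theta>
  proof -
    have "(\<integral>\<^sup>+z. ennreal (obs' z \<theta> * R \<theta> z) \<partial>MY') = (\<integral>\<^sup>+z. ennreal (obs' z \<theta>) * ennreal (R \<theta> z) \<partial>MY')"
      using th ob0' R0 by (intro nn_integral_cong) (auto simp: ennreal_mult'')
    also have "\<dots> = (\<integral>\<^sup>+z. ennreal (R \<theta> z) \<partial>density MY' (\<lambda>y'. ennreal (obs' y' \<theta>)))"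
      using th by (intro nn_integral_density[symmetric]) measurable
    also have "\<dots> = (\<integral>\<^sup>+z. ennreal (R \<theta> z) \<partial>distr (density MY (\<lambda>y. ennreal (obs y \<theta>))) MY' t)"
      using assms(7) th by simp
    also have "\<dots> = (\<integral>\<^sup>+y. ennreal (R \<theta> (t y)) \<partial>density MY (\<lambda>y. ennreal (obs y \<theta>)))"
      using th by (intro nn_integral_distr) measurable
    also have "\<dots> = (\<integral>\<^sup>+y. ennreal (obs y \<theta>) * ennreal (R \<theta> (t y)) \<partial>MY)"
      using th by (intro nn_integral_density) measurable
    also have "\<dots> = (\<integral>\<^sup>+y. ennreal (obs y \<theta> * R \<theta> (t y)) \<partial>MY)"
      using th ob0 R0 by (intro nn_integral_cong) (auto simp: ennreal_mult'')
    finally show ?thesis by simp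
  qed
  have "(\<integral>y. qfun MT prior obs (\<lambda>\<theta> y. phi' \<theta> (t y)) (\<lambda>\<theta> y. f' \<theta> (t y)) x y * marg MT prior obs y \<partial>MY)
      = (\<integral>y. (\<integral>\<theta>. post MT prior obs \<theta> y * R \<theta> (t y) \<partial>MT) * marg MT prior obs y \<partial>MY)"
    by (simp add: qfun_def rank_cdf_comp R_def)
  also have "\<dots> = enn2real (\<integral>\<^sup>+\<theta>. ennreal (prior \<theta>) * (\<integral>\<^sup>+y. ennreal (obs y \<theta> * R \<theta> (t y)) \<partial>MY) \<partial>MT)"
    by (rule sbc_integral[OF assms(1,2,4) Rm2 R0 R1])
  also have "\<dots> = enn2real (\<integral>\<^sup>+\<theta>. ennreal (prior \<theta>) * (\<integral>\<^sup>+z. ennreal (obs' z \<theta> * R \<theta> z) \<partial>MY') \<partial>MT)"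
    by (intro arg_cong[where f=enn2real] nn_integral_cong) (simp add: inner)
  also have "\<dots> = (\<integral>z. (\<integral>\<theta>. post MT prior obs' \<theta> z * R \<theta> z \<partial>MT) * marg MT prior obs' z \<partial>MY')"
    by (rule sbc_integral[OF assms(1,3,6) Rm R0 R1, symmetric])
  also have "\<dots> = (\<integral>z. qfun MT prior obs' phi' f' x z * marg MT prior obs' z \<partial>MY')"
    by (simp add: qfun_def R_def)
  also have "\<dots> = x" using assms(10) x unfolding passes_SBC_def by blast
  finally show "(\<integral>y. qfun MT prior obs (\<lambda>\<theta> y. phi' \<theta> (t y)) (\<lambda>\<theta> y. f' \<theta> (t y)) x y * marg MT prior obs y \<partial>MY) = x" .
qed

end
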